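(* If $n=1$ or $n\ge3$, all zeros of $\Phi_n(x)$ other than $x=2$ are simple. For $n=2$ one has $\Phi_2(x)=3(x-2)^2(x+1)^2$.
   Context: $U_n$ is the Chebyshev polynomial of the second kind, $U_n(\cos\theta)=\sin((n+1)\theta)/\sin\theta$, $\tilde U_n(x)=U_n(x/2)$, and $\Phi_n(x)=((n+1)x^2-6x-4n)\tilde U_n(x)+2(x+2)\tilde U_{n-1}(x)+2(x+2)$. *)

theory Defs
  imports "HOL-Computational_Algebra.Polynomial"
begin

(* Chebyshev polynomials of the second kind, via the standard recurrence
   U_0 = 1, U_1 = 2x, U_{n+2} = 2x U_{n+1} - U_n
   (equivalently U_n(cos t) = sin((n+1)t)/sin t). *)
fun chebU :: "nat \<Rightarrow> complex poly" where
  "chebU 0 = 1"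
| "chebU (Suc 0) = [:0, 2:]"
| "chebU (Suc (Suc n)) = [:0, 2:] * chebU (Suc n) - chebU n"

definition chebU_tilde :: "nat \<Rightarrow> complex poly" where
  "chebU_tilde n = pcompose (chebU n) [:0, 1/2:]"

(* \<Phi>_n(x) = ((n+1)x^2 - 6x - 4n) \<tilde>U_n(x) + 2(x+2) \<tilde>U_{n-1}(x) + 2(x+2);
   only meaningful for n \<ge> 1 (n - 1 is natural-number subtraction). *)
definition Phi :: "nat \<Rightarrow> complex poly" where
  "Phi n = [:- 4 * of_nat n, -6, of_nat n + 1:] * chebU_tilde n
         + [:4, 2:] * chebU_tilde (n - 1) + [:4, 2:]"

end

theory Submission
  imports Defs Complex_Main
begin

lemma cT0: "chebU_tilde 0 = 1" by (simp add: chebU_tilde_def one_pCons pcompose_pCons)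
lemma cT1: "chebU_tilde (Suc 0) = [:0,1:]" by (simp add: chebU_tilde_def pcompose_pCons)
lemma cTSS: "chebU_tilde (Suc (Suc n)) = [:0,1:] * chebU_tilde (Suc n) - chebU_tilde n"
  by (simp add: chebU_tilde_def pcompose_diff pcompose_mult pcompose_pCons pcompose_smult)

lemma poly_cTSS: "poly (chebU_tilde (Suc (Suc n))) x = x * poly (chebU_tilde (Suc n)) x - poly (chebU_tilde n) x"
  by (simp add: cTSS)

lemma cT_at2: "poly (chebU_tilde n) 2 = of_nat n + 1 \<and> poly (chebU_tilde (Suc n)) 2 = of_nat n + 2"
  by (induction n) (simp_all add: cT0 cT1 poly_cTSS algebra_simps)

lemma cT_atm2: "poly (chebU_tilde n) (-2) = (-1)^n * (of_nat n + 1) \<and> poly (chebU_tilde (Suc n)) (-2) = (-1)^(Suc n) * (of_nat n + 2)"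
proof (induction n)
  case 0 then show ?case by (simp add: cT0 cT1)
next
  case (Suc n)
  then show ?case by (simp only: poly_cTSS, simp add: algebra_simps)
qed

lemma cT_d2: "poly (pderiv (chebU_tilde n)) 2 = of_nat n * (of_nat n + 1) * (of_nat n + 2) / 6
   \<and> poly (pderiv (chebU_tilde (Suc n))) 2 = (of_nat n + 1) * (of_nat n + 2) * (of_nat n + 3) / 6"
proof (induction n)
  case 0 then show ?case by (simp add: cT0 cT1 pderiv_pCons)
next
  case (Suc n)
  have "poly (pderiv (chebU_tilde (Suc (Suc n)))) 2 = poly (chebU_tilde (Suc n)) 2 + 2 * poly (pderiv (chebU_tilde (Suc n))) 2 - poly (pderiv (chebU_tilde n)) 2"
    by (simp add: cTSS pderiv_diff pderiv_mult pderiv_pCons)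
  also have "\<dots> = (of_nat (Suc n) + 1) * (of_nat (Suc n) + 2) * (of_nat (Suc n) + 3) / 6"
    using Suc cT_at2[of n] by (simp only:, simp add: field_simps)
  finally show ?case using Suc by (simp add: algebra_simps)
qed

lemma cT_deg: "degree (chebU_tilde n) \<le> n \<and> degree (chebU_tilde (Suc n)) \<le> Suc n"
proof (induction n)
  case 0 then show ?case by (simp add: cT0 cT1)
next
  case (Suc n)
  have "degree ([:0,1:] * chebU_tilde (Suc n)) \<le> Suc (Suc n)"
    using Suc degree_mult_le[of "[:0,1:]" "chebU_tilde (Suc n)"] by simp
  moreover have "degree (chebU_tilde n) \<le> Suc (Suc n)" using Suc by simp
  ultimately show ?case using Suc by (simp add: cTSS degree_diff_le)
qed

lemma double_root:
  fixes p :: "complex poly"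
  assumes "poly p a = 0" "poly (pderiv p) a = 0"
  shows "[:-a,1:]^2 dvd p"
proof -
  obtain r where r: "p = [:-a,1:] * r" using assms(1) poly_eq_0_iff_dvd by (metis dvdE)
  have "poly (pderiv p) a = poly r a" by (simp only: r pderiv_mult poly_add poly_mult, simp add: pderiv_pCons)
  hence "poly r a = 0" using assms(2) by simp
  then obtain r' where "r = [:-a,1:] * r'" using poly_eq_0_iff_dvd by (metis dvdE)
  hence "p = [:-a,1:]^2 * r'" using r by (simp only: power2_eq_square mult.assoc)
  thus ?thesis by (rule dvdI)
qed

lemma Phi_dvd: "[:-2,1:]^2 dvd Phi (Suc m)"
proof (rule double_root)
  show "poly (Phi (Suc m)) 2 = 0"
    using cT_at2[of m] by (simp only: Phi_def poly_add poly_mult diff_Suc_1, simp add: algebra_simps)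
  have "poly (pderiv (Phi (Suc m))) 2 = poly (pderiv [:- 4 * of_nat (Suc m), -6, of_nat (Suc m) + 1:]) 2 * poly (chebU_tilde (Suc m)) 2
     + poly [:- 4 * of_nat (Suc m), -6, of_nat (Suc m) + 1:] 2 * poly (pderiv (chebU_tilde (Suc m))) 2
     + poly (pderiv [:4, 2:]) 2 * poly (chebU_tilde m) 2 + poly [:4, 2:] 2 * poly (pderiv (chebU_tilde m)) 2
     + poly (pderiv [:4, 2:]) 2"
    by (simp only: Phi_def pderiv_add pderiv_mult poly_add poly_mult diff_Suc_1, simp add: algebra_simps)
  also have "\<dots> = 0"
    apply (simp add: pderiv_pCons cT_at2 cT_d2)
    apply (simp add: field_simps)
    done
  finally show "poly (pderiv (Phi (Suc m))) 2 = 0" .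
qed

lemma deg3: "degree [:a,b,c::complex:] \<le> 2"
  by (auto simp: degree_pCons_eq_if)

lemma Phi_deg: "degree (Phi (Suc m)) \<le> Suc m + 2"
proof -
  have "degree ([:- 4 * of_nat (Suc m), -6, of_nat (Suc m) + 1:] * chebU_tilde (Suc m)) \<le> Suc m + 2"
    using degree_mult_le[of "[:- 4 * of_nat (Suc m), -6, of_nat (Suc m) + 1:]" "chebU_tilde (Suc m)"] cT_deg[of m]
      deg3[of "- 4 * of_nat (Suc m)" "-6" "of_nat (Suc m) + 1"]
    by linarith
  moreover have "degree ([:4, 2:] * chebU_tilde m) \<le> Suc m + 2"
    using degree_mult_le[of "[:4, 2:]" "chebU_tilde m"] cT_deg[of m] by simp
  moreover have "degree ([:4, 2:]::complex poly) \<le> Suc m + 2" by simp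
  ultimately show ?thesis unfolding Phi_def diff_Suc_1
    by (intro degree_add_le) simp_all
qed

lemma Phi_nz: "Phi (Suc m) \<noteq> 0"
proof
  assume "Phi (Suc m) = 0"
  hence "poly (Phi (Suc m)) (-2) = 0" by simp
  moreover have "poly (Phi (Suc m)) (-2) = 16 * (-1)^(Suc m) * (of_nat m + 2)"
    using cT_atm2[of m] by (simp only: Phi_def poly_add poly_mult diff_Suc_1, simp add: algebra_simps)
  moreover have "(of_nat (m+2)::complex) \<noteq> 0" by (simp only: of_nat_eq_0_iff)
  ultimately show False by (simp add: add.commute)
qed

fun ut :: "nat \<Rightarrow> real \<Rightarrow> real" where
  "ut 0 x = 1" | "ut (Suc 0) x = x" | "ut (Suc (Suc n)) x = x * ut (Suc n) x - ut n x"

lemma cT_real: "poly (chebU_tilde n) (complex_of_real x) = complex_of_real (ut n x)"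
  by (induction n x rule: ut.induct) (simp_all add: cT0 cT1 poly_cTSS)

lemma ut_sin: "ut n (2*cos t) * sin t = sin (real (Suc n) * t)"
proof (induction n "2*cos t" rule: ut.induct)
  case 1 then show ?case by simp
next
  case 2 then show ?case by (simp add: sin_double)
next
  case (3 n)
  have a: "real (Suc (Suc (Suc n))) * t = real (Suc (Suc n)) * t + t" by (simp add: algebra_simps)
  have b: "real (Suc n) * t = real (Suc (Suc n)) * t - t" by (simp add: algebra_simps)
  have "ut (Suc (Suc n)) (2 * cos t) * sin t = 2 * cos t * (ut (Suc n) (2 * cos t) * sin t) - ut n (2 * cos t) * sin t"
    by (simp add: algebra_simps)
  also have "\<dots> = 2 * cos t * sin (real (Suc (Suc n)) * t) - sin (real (Suc n) * t)" using 3 by simp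
  also have "\<dots> = sin (real (Suc (Suc (Suc n))) * t)"
    unfolding a by (subst b, simp only: sin_add sin_diff, simp add: algebra_simps)
  finally show ?case .
qed

definition Hr :: "nat \<Rightarrow> real \<Rightarrow> real" where
  "Hr n x = ((real n + 1) * x^2 - 6*x - 4 * real n) * ut n x + 2*(x+2) * ut (n-1) x + 2*(x+2)"

lemma Phi_real: "poly (Phi n) (complex_of_real x) = complex_of_real (Hr n x)"
  by (simp add: Phi_def Hr_def cT_real algebra_simps power2_eq_square)

definition hh :: "nat \<Rightarrow> real \<Rightarrow> real" where
  "hh n p = cos p ^ 3 * sin (real (Suc n) * p) - sin p * ((real n + 2) * cos p ^ 2 - 1) * cos (real (Suc n) * p)"

lemma key_alg:
  fixes s c S C n U1 U0 :: real
  assumes "s^2 + c^2 = 1" "S^2+C^2 = 1"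
    and "U1 * (2*s*c) = 2*S*C"
    and "U0 * (2*s*c) = 2*S*C*(c^2-s^2) - (C^2-S^2)*(2*s*c)"
  shows "(((n+1)*(2*(c^2-s^2))^2 - 6*(2*(c^2-s^2)) - 4*n) * U1 + 2*(2*(c^2-s^2)+2)*U0 + 2*(2*(c^2-s^2)+2)) * c * (2*s*c)
       = 16 * S * (c^3 * S - s*((n+2)*c^2-1)*C) * (2*s*c)"
  using assms by algebra

lemma Hr_hh:
  assumes "sin p \<noteq> 0" "cos p \<noteq> 0"
  shows "Hr (Suc m) (2*cos(2*p)) * cos p = 16 * sin (real (Suc (Suc m)) * p) * hh (Suc m) p"
proof -
  define s c S C where "s = sin p" "c = cos p" "S = sin (real (Suc (Suc m)) * p)" "C = cos (real (Suc (Suc m)) * p)"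
  define x where "x = 2*cos(2*p)"
  have x: "x = 2*(c^2-s^2)" unfolding x_def s_c_S_C_def by (simp add: cos_double)
  have s2: "sin (2*p) = 2*s*c" unfolding s_c_S_C_def by (simp add: sin_double)
  have U1: "ut (Suc m) x * (2*s*c) = 2*S*C"
  proof -
    have e: "real (Suc (Suc m)) * (2*p) = 2 * (real (Suc (Suc m)) * p)" by simp
    show ?thesis
      using ut_sin[of "Suc m" "2*p"] unfolding x_def s2[symmetric] e sin_double
      unfolding s_c_S_C_def by simp
  qed
  have U0: "ut m x * (2*s*c) = 2*S*C*(c^2-s^2) - (C^2-S^2)*(2*s*c)"
  proof -
    have e: "real (Suc m) * (2*p) = 2 * (real (Suc (Suc m)) * p) - 2 * p" by (simp add: algebra_simps)
    show ?thesis
      using ut_sin[of m "2*p"] unfolding x_def s2[symmetric] e sin_diff sin_double cos_double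
      unfolding s_c_S_C_def by simp
  qed
  have eq: "Hr (Suc m) x * c * (2*s*c) = 16 * S * (c^3 * S - s*((real (Suc m)+2)*c^2-1)*C) * (2*s*c)"
    unfolding Hr_def diff_Suc_1 x
    using key_alg[of s c S C "ut (Suc m) x" "ut m x" "real (Suc m)"] U1 U0 x
    unfolding s_c_S_C_def by simp
  have "2*s*c \<noteq> 0" using assms unfolding s_c_S_C_def by simp
  hence "Hr (Suc m) x * c = 16 * S * (c^3 * S - s*((real (Suc m)+2)*c^2-1)*C)"
    using eq by (simp add: mult.commute mult.assoc)
  thus ?thesis unfolding hh_def x_def s_c_S_C_def by simp
qed

fun Vi :: "int \<Rightarrow> int \<Rightarrow> nat \<Rightarrow> int" where
  "Vi a b 0 = 1" | "Vi a b (Suc 0) = a" | "Vi a b (Suc (Suc k)) = a * Vi a b (Suc k) - b^2 * Vi a b k"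

lemma Vi_real:
  assumes "b \<noteq> 0"
  shows "real_of_int (Vi a b k) = real_of_int b ^ k * ut k (real_of_int a / real_of_int b)"
  using assms proof (induction a b k rule: Vi.induct)
  case (3 a b k)
  let ?x = "real_of_int a / real_of_int b"
  have "real_of_int (Vi a b (Suc (Suc k))) = real_of_int a * real_of_int (Vi a b (Suc k)) - real_of_int b ^ 2 * real_of_int (Vi a b k)"
    by simp
  also have "\<dots> = real_of_int a * (real_of_int b ^ Suc k * ut (Suc k) ?x) - real_of_int b ^ 2 * (real_of_int b ^ k * ut k ?x)"
    using 3 by simp
  also have "\<dots> = real_of_int b ^ Suc (Suc k) * (?x * ut (Suc k) ?x - ut k ?x)"
  proof -
    have bx: "real_of_int b ^ Suc (Suc k) * ?x = real_of_int a * real_of_int b ^ Suc k"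
      using 3(3) by simp
    have bb: "real_of_int b ^ Suc (Suc k) = real_of_int b ^ 2 * real_of_int b ^ k"
      by (simp add: power2_eq_square)
    have "real_of_int b ^ Suc (Suc k) * (?x * ut (Suc k) ?x - ut k ?x)
        = (real_of_int b ^ Suc (Suc k) * ?x) * ut (Suc k) ?x - real_of_int b ^ Suc (Suc k) * ut k ?x"
      by (simp only: right_diff_distrib mult.assoc)
    also have "\<dots> = real_of_int a * real_of_int b ^ Suc k * ut (Suc k) ?x - real_of_int b ^ 2 * real_of_int b ^ k * ut k ?x"
      by (simp only: bx, simp only: bb)
    finally show ?thesis by (simp only: mult.assoc)
  qed
  finally show ?case by simp
qed simp_all

lemma Vi_mod: "b dvd (Vi a b k - a^k)"
proof (induction a b k rule: Vi.induct)
  case (3 a b k)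
  have "Vi a b (Suc (Suc k)) - a^Suc (Suc k) = a * (Vi a b (Suc k) - a ^ Suc k) - b * (b * Vi a b k)"
    by (simp add: algebra_simps power2_eq_square)
  thus ?case using 3 by simp
qed simp_all

lemma ut_nonroot:
  assumes n: "n \<ge> 3"
  shows "ut n (- 2 * real n / (real n + 2)) \<noteq> 0"
proof
  assume u0: "ut n (- 2 * real n / (real n + 2)) = 0"
  define x where "x = - 2 * real n / (real n + 2)"
  have "x \<in> \<rat>" unfolding x_def by simp
  then obtain a b where ab: "b > 0" "coprime a b" "x = real_of_int a / real_of_int b"
    by (rule Rats_cases') auto
  have xe: "real_of_int a / real_of_int b = - 2 * real n / (real n + 2)" using ab(3) unfolding x_def by simp
  have "ut n (real_of_int a / real_of_int b) = 0" unfolding xe by (rule u0)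
  hence "real_of_int (Vi a b n) = 0" using Vi_real[of b a n] ab(1) by simp
  hence "Vi a b n = 0" by simp
  hence "b dvd a^n" using Vi_mod[of b a n] by (simp add: dvd_diff_commute)
  moreover have "coprime (a^n) b" using ab(2) by simp
  ultimately have "is_unit b" using coprime_common_divisor[of "a^n" b b] by simp
  hence b1: "b = 1" using ab(1) by simp
  have xa: "x = real_of_int a" using ab(3) b1 by simp
  have "x > -2" unfolding x_def by (simp add: field_simps)
  moreover have "x < 0" using n unfolding x_def by (simp add: field_simps)
  ultimately have "a = -1" using xa by linarith
  hence "- 2 * real n = - (real n + 2)" using xa unfolding x_def by (simp add: field_simps)
  thus False using n by simp
qed

definition ph :: "nat \<Rightarrow> nat \<Rightarrow> real" where "ph n k = real k * pi / (2 * real (Suc n))"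
definition Kf :: "nat \<Rightarrow> real \<Rightarrow> real" where "Kf n p = (real n + 2) * cos p ^ 2 - 1"

lemma ph_less: "ph n k < ph n k' \<longleftrightarrow> k < k'"
proof -
  have d: "2 * real (Suc n) > 0" by simp
  show ?thesis unfolding ph_def using d pi_gt_zero
    by (simp only: divide_less_cancel mult_less_cancel_right) (simp add: pi_gt_zero not_le[symmetric])
qed
lemma ph_le: "ph n k \<le> ph n k' \<longleftrightarrow> k \<le> k'"
  using ph_less[of n k' k] by linarith
lemma ph_N: "ph n (Suc n) = pi/2"
  unfolding ph_def by (simp del: of_nat_Suc)
lemma ph_0: "ph n 0 = 0" by (simp add: ph_def)
lemma ph_nonneg: "ph n k \<ge> 0" by (simp add: ph_def)
lemma ph_le_half: "k \<le> Suc n \<Longrightarrow> ph n k \<le> pi/2"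
  using ph_le[of n k "Suc n"] ph_N by simp
lemma ph_less_half: "k < Suc n \<Longrightarrow> ph n k < pi/2"
  using ph_less[of n k "Suc n"] ph_N by simp
lemma Nph: "real (Suc n) * ph n k = real k * pi / 2"
  unfolding ph_def by (simp del: of_nat_Suc)

lemma hh_even: "hh n (ph n (2*j)) = - sin (ph n (2*j)) * Kf n (ph n (2*j)) * (-1)^j"
proof -
  have e: "real (Suc n) * ph n (2*j) = real j * pi" unfolding Nph by simp
  show ?thesis unfolding hh_def Kf_def e by simp
qed

lemma hh_odd: "hh n (ph n (2*j+1)) = cos (ph n (2*j+1))^3 * (-1)^j"
proof -
  have e: "real (Suc n) * ph n (2*j+1) = real j * pi + pi/2" unfolding Nph by (simp add: field_simps)
  show ?thesis unfolding hh_def e by (simp add: sin_add cos_add)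
qed

lemma sin_ph_pos: "0 < k \<Longrightarrow> k \<le> Suc n \<Longrightarrow> sin (ph n k) > 0"
  apply (rule sin_gt_zero)
  using ph_less[of n 0 k] ph_0 ph_le_half[of k n] pi_gt_zero by auto

lemma cos_ph_pos: "k < Suc n \<Longrightarrow> cos (ph n k) > 0"
  apply (rule cos_gt_zero_pi)
  using ph_nonneg[of n k] ph_less_half[of k n] pi_gt_zero by auto

lemma Kf_mono: "0 \<le> a \<Longrightarrow> a \<le> b \<Longrightarrow> b \<le> pi/2 \<Longrightarrow> Kf n b \<le> Kf n a"
proof -
  assume h: "0 \<le> a" "a \<le> b" "b \<le> pi/2"
  have "cos b \<le> cos a" using h by (intro cos_monotone_0_pi_le) auto
  moreover have "cos b \<ge> 0" using h by (intro cos_ge_zero) auto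
  ultimately have "cos b ^ 2 \<le> cos a ^ 2" by (simp add: power_mono)
  thus ?thesis unfolding Kf_def by (simp add: mult_left_mono)
qed

lemma Kf_nz:
  assumes n: "n = 1 \<or> n \<ge> 3" and j: "1 \<le> j" "2*j < Suc n"
  shows "Kf n (ph n (2*j)) \<noteq> 0"
proof
  assume K0: "Kf n (ph n (2*j)) = 0"
  have n3: "n \<ge> 3" using n j by auto
  define p where "p = ph n (2*j)"
  have c2: "cos p ^ 2 = 1 / (real n + 2)" using K0 unfolding Kf_def p_def by (simp add: field_simps)
  have x: "2 * cos (2*p) = - 2 * real n / (real n + 2)"
    unfolding cos_double_cos c2 by (simp add: field_simps)
  have "ut n (2 * cos (2*p)) * sin (2*p) = sin (real (Suc n) * (2*p))" by (rule ut_sin)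
  also have "real (Suc n) * (2*p) = real (2*j) * pi" unfolding p_def using Nph[of n "2*j"] by simp
  finally have u: "ut n (2 * cos (2*p)) * sin (2*p) = 0" by (simp only: sin_npi)
  have "0 < 2*p" unfolding p_def using ph_less[of n 0 "2*j"] ph_0 j by simp
  moreover have "2*p < pi" unfolding p_def using ph_less_half[of "2*j" n] j by simp
  ultimately have "sin (2*p) \<noteq> 0" using sin_gt_zero by fastforce
  hence "ut n (2 * cos (2*p)) = 0" using u by simp
  thus False using ut_nonroot[OF n3] x by simp
qed

lemma Kf_last:
  assumes n: "n = 1 \<or> n \<ge> 3"
  shows "Kf n (ph n (2 * (Suc n div 2))) < 0"
proof (cases "even (Suc n)")
  case True
  hence k: "2 * (Suc n div 2) = Suc n" by simp
  show ?thesis unfolding k Kf_def ph_N by simp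
next
  case False
  then obtain M where M: "n = 2*M" by (metis even_Suc evenE)
  have M2: "M \<ge> 2" using n M by auto
  have k: "2 * (Suc n div 2) = 2*M" using M by simp
  define p where "p = ph n (2*M)"
  have pe: "p = pi/2 - pi / (2*(2*real M+1))" unfolding p_def ph_def M by (simp add: field_simps)
  have cp: "cos p = sin (pi / (2*(2*real M+1)))" unfolding pe cos_sin_eq by simp
  have c0: "cos p \<ge> 0" unfolding cp by (rule sin_ge_zero) (auto simp: field_simps)
  have "cos p \<le> pi / (2*(2*real M+1))" unfolding cp by (rule sin_x_le_x) simp
  also have "\<dots> < 4 / (2*(2*real M+1))" using pi_less_4 by (simp add: divide_strict_right_mono)
  also have "4 / (2*(2*real M+1)) = 2 / (2*real M+1)" by (simp add: field_simps)
  finally have cl: "cos p < 2 / (2*real M+1)" .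
  have "cos p ^ 2 < (2 / (2*real M+1))^2" using c0 cl by (simp add: power_strict_mono)
  hence "(real n + 2) * cos p ^ 2 < (real n + 2) * (2 / (2*real M+1))^2" by simp
  also have "\<dots> \<le> 1"
  proof -
    have "real M \<ge> 2" using M2 by simp
    hence sq: "2 * real M \<le> real M * real M" using mult_right_mono[of 2 "real M" "real M"] by simp
    have ex: "(2*real M+1)^2 = 4*(real M*real M) + 4*real M + 1" by (simp add: power2_eq_square algebra_simps)
    have "4 * (2*real M + 2) \<le> (2*real M+1)^2" unfolding ex using sq \<open>real M \<ge> 2\<close> by smt
    thus ?thesis unfolding M by (simp add: field_simps power2_eq_square)
  qed
  finally show ?thesis unfolding k Kf_def p_def by simp
qed

lemma sign_change:
  fixes f :: "real \<Rightarrow> real"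
  assumes "continuous_on {a..b} f" "a \<le> b" "f a * f b < 0"
  shows "\<exists>c. a < c \<and> c < b \<and> f c = 0"
proof (cases "f a < 0")
  case True
  hence "f b > 0" using assms(3) by (simp add: mult_less_0_iff)
  then obtain c where c: "a \<le> c" "c \<le> b" "f c = 0" using IVT'[of f a 0 b] assms True by auto
  have "c \<noteq> a" "c \<noteq> b" using c True \<open>f b > 0\<close> by auto
  hence "a < c" "c < b" using c by auto
  thus ?thesis using c by blast
next
  case False
  hence fa: "f a > 0" "f b < 0" using assms(3) by (auto simp add: mult_less_0_iff)
  then obtain c where c: "a \<le> c" "c \<le> b" "f c = 0" using IVT2'[of f b 0 a] assms by auto
  have "c \<noteq> a" "c \<noteq> b" using c fa by auto
  hence "a < c" "c < b" using c by auto
  thus ?thesis using c by blast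
qed

lemma hh_cont: "continuous_on S (hh n)"
proof -
  have "continuous_on S (\<lambda>p. hh n p)" unfolding hh_def by (intro continuous_intros)
  thus ?thesis by simp
qed

lemma roots_exist:
  assumes n: "n = 1 \<or> n \<ge> 3"
  shows "\<exists>X. finite X \<and> card X = n \<and> 2 \<notin> X \<and> (\<forall>x\<in>X. poly (Phi n) x = 0)"
proof -
  obtain m where nm: "n = Suc m" using n by (cases n) auto
  define M where "M = Suc n div 2"
  define M' where "M' = n div 2"
  have MM: "M' + M = n" unfolding M_def M'_def by presburger
  have M2N: "2*M \<le> Suc n" unfolding M_def by simp
  define J where "J = {j. j \<le> M \<and> Kf n (ph n (2*j)) > 0}"
  have finJ: "finite J" unfolding J_def by simp
  have J0: "0 \<in> J" unfolding J_def Kf_def using ph_0[of n] by simp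
  define js where "js = Max J"
  have js_in: "js \<in> J" unfolding js_def using finJ J0 by (intro Max_in) auto
  have js_le: "js \<le> M" using js_in unfolding J_def by simp
  have js_ne: "js \<noteq> M" using js_in Kf_last[OF n] unfolding J_def M_def by auto
  have js_lt: "js < M" using js_le js_ne by simp
  have Kpos: "Kf n (ph n (2*j)) > 0" if "j \<le> js" for j
  proof -
    have "Kf n (ph n (2*js)) \<le> Kf n (ph n (2*j))"
      apply (rule Kf_mono)
      using ph_nonneg[of n] ph_le[of n "2*j" "2*js"] that ph_le_half[of "2*js" n] js_lt M2N by auto
    thus ?thesis using js_in unfolding J_def by simp
  qed
  have Kneg: "Kf n (ph n (2*j)) < 0" if "js < j" "j \<le> M" for j
  proof -
    have "j \<notin> J" using that Max_ge[OF finJ] unfolding js_def by force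
    hence le: "Kf n (ph n (2*j)) \<le> 0" using that unfolding J_def by auto
    show ?thesis
    proof (cases "2*j < Suc n")
      case True
      thus ?thesis using Kf_nz[OF n, of j] le that by linarith
    next
      case False
      hence "2*j = Suc n" using that M2N by simp
      hence e: "ph n (2*j) = pi/2" using ph_N[of n] by simp
      show ?thesis by (simp add: Kf_def e)
    qed
  qed
  define k where "k i = (if i < js then 2*i+2 else 2*i+1)" for i
  have sc: "hh n (ph n (k i)) * hh n (ph n (Suc (k i))) < 0" if i: "i < M" for i
  proof (cases "i < js")
    case True
    have k1: "k i = 2*(Suc i)" "Suc (k i) = 2*(Suc i) + 1" unfolding k_def using True by auto
    have h1: "hh n (ph n (k i)) = - sin (ph n (k i)) * Kf n (ph n (k i)) * (-1)^(Suc i)"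
      using hh_even[of n "Suc i"] by (simp only: k1(1)[symmetric])
    have h2: "hh n (ph n (Suc (k i))) = cos (ph n (Suc (k i)))^3 * (-1)^(Suc i)"
      using hh_odd[of n "Suc i"] by (simp only: k1(2)[symmetric])
    have ji: "Suc i \<le> js" using True by simp
    have p1: "Kf n (ph n (k i)) > 0" using Kpos[OF ji] by (simp only: k1(1)[symmetric])
    have p2: "sin (ph n (k i)) > 0" unfolding k1(1)
    proof -
      have "0 < 2*Suc i" "2*Suc i \<le> Suc n" using True js_lt M2N by auto
      thus "sin (ph n (2*Suc i)) > 0" by (rule sin_ph_pos)
    qed
    have p3: "cos (ph n (Suc (k i))) > 0" unfolding k1(2)
    proof -
      have "2*Suc i + 1 < Suc n" using True js_lt M2N by auto
      thus "cos (ph n (2*Suc i + 1)) > 0" by (rule cos_ph_pos)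
    qed
    have "hh n (ph n (k i)) * hh n (ph n (Suc (k i)))
       = - (sin (ph n (k i)) * Kf n (ph n (k i)) * cos (ph n (Suc (k i)))^3) * ((-1)^(Suc i) * (-1)^(Suc i))"
      unfolding h1 h2 by (simp add: algebra_simps)
    also have "\<dots> = - (sin (ph n (k i)) * Kf n (ph n (k i)) * cos (ph n (Suc (k i)))^3)"
      by (simp only: minus_one_mult_self mult_1_right)
    finally show ?thesis using p1 p2 p3 by (simp add: mult_pos_pos)
  next
    case False
    have k1: "k i = 2*i+1" "Suc (k i) = 2*(Suc i)" unfolding k_def using False by auto
    have h1: "hh n (ph n (k i)) = cos (ph n (k i))^3 * (-1)^i"
      using hh_odd[of n i] by (simp only: k1(1)[symmetric])
    have h2: "hh n (ph n (Suc (k i))) = - sin (ph n (Suc (k i))) * Kf n (ph n (Suc (k i))) * (-1)^(Suc i)"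
      using hh_even[of n "Suc i"] by (simp only: k1(2)[symmetric])
    have ji: "js < Suc i" "Suc i \<le> M" using False i by auto
    have p1: "Kf n (ph n (Suc (k i))) < 0" using Kneg[OF ji] by (simp only: k1(2)[symmetric])
    have p2: "sin (ph n (Suc (k i))) > 0" unfolding k1(2)
    proof -
      have "0 < 2*Suc i" "2*Suc i \<le> Suc n" using i M2N by auto
      thus "sin (ph n (2*Suc i)) > 0" by (rule sin_ph_pos)
    qed
    have p3: "cos (ph n (k i)) > 0" unfolding k1(1)
    proof -
      have "2*i + 1 < Suc n" using i M2N by auto
      thus "cos (ph n (2*i + 1)) > 0" by (rule cos_ph_pos)
    qed
    have "hh n (ph n (k i)) * hh n (ph n (Suc (k i)))
       = (cos (ph n (k i))^3 * sin (ph n (Suc (k i)))) * Kf n (ph n (Suc (k i))) * ((-1)^i * (-1)^i)"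
      unfolding h1 h2 power_Suc by (simp add: algebra_simps)
    also have "\<dots> = (cos (ph n (k i))^3 * sin (ph n (Suc (k i)))) * Kf n (ph n (Suc (k i)))"
      by (simp only: minus_one_mult_self mult_1_right)
    finally show ?thesis using p1 p2 p3 by (simp add: mult_pos_neg)
  qed
  have "\<forall>i\<in>{..<M}. \<exists>c. ph n (k i) < c \<and> c < ph n (Suc (k i)) \<and> hh n c = 0"
  proof
    fix i assume "i \<in> {..<M}"
    hence "hh n (ph n (k i)) * hh n (ph n (Suc (k i))) < 0" using sc by simp
    moreover have "ph n (k i) \<le> ph n (Suc (k i))" using ph_le by simp
    ultimately show "\<exists>c. ph n (k i) < c \<and> c < ph n (Suc (k i)) \<and> hh n c = 0"
      using sign_change[OF hh_cont] by blast
  qed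
  from bchoice[OF this] obtain \<rho> where \<rho>: "\<forall>i\<in>{..<M}. ph n (k i) < \<rho> i \<and> \<rho> i < ph n (Suc (k i)) \<and> hh n (\<rho> i) = 0"
    by blast
  have kmono: "Suc (k i) \<le> k i'" if "i < i'" for i i' unfolding k_def using that by auto
  have \<rho>mono: "\<rho> i < \<rho> i'" if "i < i'" "i' < M" for i i'
  proof -
    have "\<rho> i < ph n (Suc (k i))" using \<rho> that by auto
    also have "\<dots> \<le> ph n (k i')" using kmono[OF that(1)] ph_le by simp
    also have "\<dots> < \<rho> i'" using \<rho> that by auto
    finally show ?thesis .
  qed
  define A where "A = (\<lambda>j. ph n (2*j)) ` {1..M'}"
  define B where "B = \<rho> ` {..<M}"
  define Z where "Z = A \<union> B"
  have cardA: "card A = M'"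
  proof -
    have "inj_on (\<lambda>j. ph n (2*j)) {1..M'}"
    proof (rule inj_onI)
      fix x y assume "ph n (2*x) = ph n (2*y)"
      hence "2*x \<le> 2*y" "2*y \<le> 2*x" using ph_le[of n "2*x" "2*y"] ph_le[of n "2*y" "2*x"] by auto
      thus "x = y" by simp
    qed
    thus ?thesis unfolding A_def by (simp add: card_image)
  qed
  have cardB: "card B = M"
  proof -
    have "inj_on \<rho> {..<M}"
    proof (rule inj_onI)
      fix i i' assume ii: "i \<in> {..<M}" "i' \<in> {..<M}" "\<rho> i = \<rho> i'"
      show "i = i'"
      proof (rule ccontr)
        assume "i \<noteq> i'"
        hence "i < i' \<or> i' < i" by arith
        thus False using \<rho>mono ii by fastforce
      qed
    qed
    thus ?thesis unfolding B_def by (simp add: card_image)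
  qed
  have AB: "A \<inter> B = {}"
  proof (rule ccontr)
    assume "A \<inter> B \<noteq> {}"
    then obtain j i where i: "i < M" and eq: "ph n (2*j) = \<rho> i" unfolding A_def B_def by auto
    have "ph n (k i) < ph n (2*j)" "ph n (2*j) < ph n (Suc (k i))" using \<rho> i eq by auto
    hence "k i < 2*j" "2*j < Suc (k i)" using ph_less by auto
    thus False by simp
  qed
  have finZ: "finite Z" unfolding Z_def A_def B_def by simp
  have cardZ: "card Z = n" unfolding Z_def
    using card_Un_disjoint[of A B] AB cardA cardB MM unfolding A_def B_def by simp
  have Zp: "0 < p \<and> p < pi/2 \<and> sin (real (Suc n) * p) * hh n p = 0" if p: "p \<in> Z" for p
  proof (cases "p \<in> A")
    case True
    then obtain j where j: "j \<in> {1..M'}" "p = ph n (2*j)" unfolding A_def by auto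
    have "0 < p" using j ph_less[of n 0 "2*j"] ph_0 by simp
    moreover have "2*j < Suc n" using j unfolding M'_def by auto
    hence "p < pi/2" using j ph_less_half[of "2*j" n] by simp
    moreover have "real (Suc n) * p = real j * pi" using j Nph[of n "2*j"] by simp
    ultimately show ?thesis by simp
  next
    case False
    then obtain i where i: "i < M" "p = \<rho> i" using p unfolding Z_def B_def by auto
    have "0 < p" using i \<rho> ph_nonneg[of n "k i"] by force
    moreover have "Suc (k i) \<le> Suc n" unfolding k_def using i js_lt M2N by auto
    hence "p < pi/2" using i \<rho> ph_le_half[of "Suc (k i)" n] by force
    moreover have "hh n p = 0" using i \<rho> by auto
    ultimately show ?thesis by simp
  qed
  define f where "f p = complex_of_real (2 * cos (2*p))" for p
  define X where "X = f ` Z"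
  have cos_inj: "p = q" if "p \<in> Z" "q \<in> Z" "cos (2*p) = cos (2*q)" for p q
    using cos_inj_pi[of "2*p" "2*q"] Zp[OF that(1)] Zp[OF that(2)] that(3) by simp
  have injf: "inj_on f Z"
    by (rule inj_onI) (use cos_inj in \<open>auto simp: f_def\<close>)
  have cardX: "card X = n" unfolding X_def using card_image[OF injf] cardZ by simp
  have X2: "2 \<notin> X"
  proof
    assume "2 \<in> X"
    then obtain p where p: "p \<in> Z" "f p = 2" unfolding X_def by auto
    hence "complex_of_real (2*cos(2*p)) = complex_of_real 2" unfolding f_def by simp
    hence "2*cos(2*p) = 2" by (simp only: of_real_eq_iff)
    hence "cos (2*p) = cos 0" by simp
    hence "2*p = 0" using cos_inj_pi[of "2*p" 0] Zp[OF p(1)] by simp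
    thus False using Zp[OF p(1)] by simp
  qed
  have Xr: "\<forall>x\<in>X. poly (Phi n) x = 0"
  proof
    fix x assume "x \<in> X"
    then obtain p where p: "p \<in> Z" "x = f p" unfolding X_def by auto
    have cp: "cos p > 0" using Zp[OF p(1)] by (intro cos_gt_zero_pi) auto
    have sp: "sin p > 0" using Zp[OF p(1)] by (intro sin_gt_zero) auto
    have "Hr (Suc m) (2*cos(2*p)) * cos p = 16 * sin (real (Suc (Suc m)) * p) * hh (Suc m) p"
      using cp sp by (intro Hr_hh) auto
    also have "\<dots> = 0" using Zp[OF p(1)] unfolding nm by simp
    finally have "Hr n (2*cos(2*p)) = 0" using cp unfolding nm by simp
    thus "poly (Phi n) x = 0" unfolding p f_def Phi_real by simp
  qed
  show ?thesis using finZ cardX X2 Xr unfolding X_def by auto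
qed

lemma simple_roots_count:
  fixes p :: "complex poly" and X :: "complex set" and d :: nat
  assumes p0: "p \<noteq> 0" and deg: "degree p \<le> d + 2" and dv: "[:-2,1:]^2 dvd p"
    and fin: "finite X" and cX: "card X = d" and X2: "2 \<notin> X" and Xr: "\<forall>x\<in>X. poly p x = 0"
    and z: "poly p z = 0" "z \<noteq> 2"
  shows "order z p = 1"
proof -
  obtain q where pq: "p = [:-2,1:]^2 * q" using dv by (auto elim: dvdE)
  have q0: "q \<noteq> 0" using p0 pq by auto
  have dq: "degree q \<le> d" using deg pq q0 by (simp add: degree_mult_eq degree_power_eq)
  have ne: "\<And>y. y \<noteq> 2 \<Longrightarrow> poly ([:-2,1:]^2) y \<noteq> (0::complex)" by simp
  have qr: "\<And>y. y \<noteq> 2 \<Longrightarrow> poly p y = 0 \<Longrightarrow> poly q y = 0" using pq ne by auto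
  have o2: "order z ([:-2,1:]^2) = 0" using ne[OF z(2)] by (rule order_0I)
  have ozp: "order z p = order z q" using pq p0 o2 by (simp add: order_mult)
  have zq: "poly q z = 0" using qr z by auto
  have ge1: "order z q \<noteq> 0" using zq q0 order_root by blast
  have le1: "order z q \<le> 1"
  proof (rule ccontr)
    assume "\<not> order z q \<le> 1"
    hence "2 \<le> order z q" by simp
    hence "[:-z,1:]^2 dvd q" by (simp add: order_divides)
    then obtain q' where qq: "q = [:-z,1:]^2 * q'" by (auto elim: dvdE)
    have q'0: "q' \<noteq> 0" using q0 qq by auto
    have dq': "degree q' + 2 \<le> d" using dq qq q'0 by (simp add: degree_mult_eq degree_power_eq)
    have sub: "X - {z} \<subseteq> {x. poly q' x = 0}"
    proof
      fix x assume x: "x \<in> X - {z}"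
      have "x \<noteq> 2" using x X2 by auto
      hence "poly q x = 0" using qr Xr x by auto
      thus "x \<in> {x. poly q' x = 0}" using x qq by auto
    qed
    have "card (X - {z}) \<le> card {x. poly q' x = 0}"
      using sub poly_roots_finite[OF q'0] by (rule card_mono[rotated])
    also have "\<dots> \<le> degree q'" by (rule card_poly_roots_bound[OF q'0])
    finally have "card (X - {z}) \<le> degree q'" .
    moreover have "card (X - {z}) \<ge> d - 1" using fin cX by (metis card_Diff_singleton_if diff_le_self le_refl)
    ultimately show False using dq' by linarith
  qed
  show ?thesis using ozp ge1 le1 by simp
qed

lemma Phi2: "Phi 2 = smult 3 ([:-2, 1:]^2 * [:1, 1:]^2)"
  by (simp add: Phi_def numeral_2_eq_2 cTSS cT1 cT0 power2_eq_square one_pCons)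

theorem propositionB6:
  shows "(\<forall>n::nat. (n = 1 \<or> n \<ge> 3) \<longrightarrow>
            (\<forall>z::complex. poly (Phi n) z = 0 \<and> z \<noteq> 2 \<longrightarrow> order z (Phi n) = 1))
         \<and> Phi 2 = smult 3 ([:-2, 1:]^2 * [:1, 1:]^2)"
proof
  show "\<forall>n::nat. (n = 1 \<or> n \<ge> 3) \<longrightarrow>
            (\<forall>z::complex. poly (Phi n) z = 0 \<and> z \<noteq> 2 \<longrightarrow> order z (Phi n) = 1)"
  proof (intro allI impI)
    fix n :: nat and z :: complex
    assume n: "n = 1 \<or> n \<ge> 3" and z: "poly (Phi n) z = 0 \<and> z \<noteq> 2"
    obtain m where nm: "n = Suc m" using n by (cases n) auto
    obtain X where X: "finite X" "card X = n" "2 \<notin> X" "\<forall>x\<in>X. poly (Phi n) x = 0"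
      using roots_exist[OF n] by blast
    show "order z (Phi n) = 1"
    proof (rule simple_roots_count[where X=X and d=n])
      show "Phi n \<noteq> 0" unfolding nm by (rule Phi_nz)
      show "degree (Phi n) \<le> n + 2" unfolding nm by (rule Phi_deg)
      show "[:-2,1:]^2 dvd Phi n" unfolding nm by (rule Phi_dvd)
    qed (use X z in auto)
  qed
  show "Phi 2 = smult 3 ([:-2, 1:]^2 * [:1, 1:]^2)" by (rule Phi2)
qed

end
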